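(* Let $N\ge2$ and let $H\in M_{(N-1)\times N}(\mathbb T)$ be partial Hadamard. For $j=1,\ldots,N$ let $H^{(j)}\in M_{N-1}(\mathbb C)$ be obtained from $H$ by removing its $j$-th column. The following are equivalent: (1) $H$ can be completed (by adding an $N$-th row) to an $N\times N$ complex Hadamard matrix; (2) $|\det H^{(j)}|$ is independent of $j$; (3) $|\det H^{(j)}|=N^{N/2-1}$ for every $j$. If so, a completion is obtained by setting $H_{Nj}=(-1)^jN^{1-N/2}\,\overline{\det H^{(j)}}$.
   Context: $\mathbb T$ is the unit circle. A partial Hadamard matrix is a matrix with entries in $\mathbb T$ whose rows are pairwise orthogonal; an $N\times N$ complex Hadamard matrix is a partial Hadamard matrix in $M_N(\mathbb T)$. *)

theory Defs
  imports Complex_Main "Jordan_Normal_Form.Determinant"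
begin

text \<open>Matrices are Jordan_Normal_Form matrices; indices are 0-based.
  Entries in the unit circle T means norm 1.\<close>

definition partial_hadamard :: "nat \<Rightarrow> nat \<Rightarrow> complex mat \<Rightarrow> bool" where
  "partial_hadamard m n A \<longleftrightarrow>
     A \<in> carrier_mat m n \<and>
     (\<forall>i<m. \<forall>j<n. cmod (A $$ (i, j)) = 1) \<and>
     (\<forall>i<m. \<forall>k<m. i \<noteq> k \<longrightarrow> (\<Sum>j<n. A $$ (i, j) * cnj (A $$ (k, j))) = 0)"

definition complex_hadamard :: "nat \<Rightarrow> complex mat \<Rightarrow> bool" where
  "complex_hadamard n A \<longleftrightarrow> partial_hadamard n n A"

definition remove_col :: "nat \<Rightarrow> complex mat \<Rightarrow> complex mat" where
  "remove_col j A = mat (dim_row A) (dim_col A - 1)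
      (\<lambda>(i, k). A $$ (i, if k < j then k else Suc k))"

text \<open>The explicit completion: last row entry at 0-based column j (paper's column j+1)
  is (-1)^(j+1) N^(1-N/2) conj(det H^(j+1)).\<close>
definition hadamard_completion :: "nat \<Rightarrow> complex mat \<Rightarrow> complex mat" where
  "hadamard_completion N H = mat N N (\<lambda>(i, j).
      if i < N - 1 then H $$ (i, j)
      else (-1) ^ (j + 1) * complex_of_real (real N powr (1 - real N / 2))
             * cnj (det (remove_col j H)))"

end

theory Submission
  imports Defs
begin


lemma det_cnj_mat: "det (map_mat cnj (M::complex mat)) = cnj (det M)"
  unfolding det_def by (simp add: cnj_sum cnj_prod)

definition adjm :: "complex mat \<Rightarrow> complex mat" where
  "adjm M = mat (dim_col M) (dim_row M) (\<lambda>(i,j). cnj (M $$ (j,i)))"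

lemma det_adjm: assumes "M \<in> carrier_mat m m" shows "det (adjm M) = cnj (det M)"
proof -
  have "adjm M = transpose_mat (map_mat cnj M)" using assms by (auto simp: adjm_def)
  then show ?thesis using det_transpose[of "map_mat cnj M" m] assms det_cnj_mat by auto
qed

lemma gram_det:
  assumes M: "M \<in> carrier_mat m m"
   and orth: "\<And>i k. i<m \<Longrightarrow> k<m \<Longrightarrow> (\<Sum>j<m. M$$(i,j) * cnj (M$$(k,j))) = (if i=k then d i else 0)"
  shows "det M * cnj (det M) = (\<Prod>i<m. d i)"
proof -
  let ?D = "mat m m (\<lambda>(i,j). if i=j then d i else 0)"
  have "M * adjm M = ?D"
  proof (rule eq_matI)
    fix i j assume "i < dim_row ?D" "j < dim_col ?D"
    then show "(M * adjm M) $$ (i,j) = ?D $$ (i,j)" using M orth[of i j]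
      by (auto simp: adjm_def scalar_prod_def atLeast0LessThan)
  qed (use M in \<open>auto simp: adjm_def\<close>)
  moreover have "adjm M \<in> carrier_mat m m" using M by (auto simp: adjm_def)
  ultimately have "det ?D = det M * cnj (det M)" using det_mult[OF M] det_adjm[OF M] by metis
  moreover have "det ?D = (\<Prod>i<m. d i)"
  proof -
    have "det ?D = prod_list (diag_mat ?D)"
      by (rule det_upper_triangular[of _ m]) (auto simp: upper_triangular_def)
    also have "diag_mat ?D = map d [0..<m]" by (auto simp: diag_mat_def)
    also have "prod_list (map d [0..<m]) = prod d (set [0..<m])"
      by (simp add: prod.distinct_set_conv_list[symmetric])
    finally show ?thesis by (simp add: atLeast0LessThan)
  qed
  ultimately show ?thesis by simp
qed

definition extm :: "nat \<Rightarrow> complex mat \<Rightarrow> (nat \<Rightarrow> complex) \<Rightarrow> complex mat" where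
  "extm n H x = mat (Suc n) (Suc n) (\<lambda>(i,j). if i < n then H $$ (i,j) else x j)"

definition cof :: "nat \<Rightarrow> complex mat \<Rightarrow> nat \<Rightarrow> complex" where
  "cof n H j = (-1)^(n+j) * det (remove_col j H)"

lemma det_extm: assumes H: "H \<in> carrier_mat n (Suc n)"
  shows "det (extm n H x) = (\<Sum>j<Suc n. x j * cof n H j)"
proof -
  have "det (extm n H x) = (\<Sum>j<Suc n. extm n H x $$ (n,j) * cofactor (extm n H x) n j)"
    by (rule laplace_expansion_row) (auto simp: extm_def)
  also have "\<dots> = (\<Sum>j<Suc n. x j * cof n H j)"
  proof (rule sum.cong[OF refl])
    fix j assume j: "j \<in> {..<Suc n}"
    have "mat_delete (extm n H x) n j = remove_col j H"
      by (rule eq_matI) (use H in \<open>auto simp: mat_delete_def remove_col_def extm_def\<close>)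
    then show "extm n H x $$ (n,j) * cofactor (extm n H x) n j = x j * cof n H j"
      using j by (simp add: cofactor_def cof_def extm_def)
  qed
  finally show ?thesis .
qed

lemma cof_orth: assumes H: "H \<in> carrier_mat n (Suc n)" and i: "i < n"
  shows "(\<Sum>j<Suc n. H $$ (i,j) * cof n H j) = 0"
proof -
  have "det (extm n H (\<lambda>j. H $$ (i,j))) = 0"
    by (rule det_identical_rows[of _ "Suc n" i n]) (use i in \<open>auto simp: extm_def\<close>)
  then show ?thesis using det_extm[OF H] by simp
qed


lemma unit_mult_cnj: "cmod z = 1 \<Longrightarrow> z * cnj z = 1"
  by (metis complex_norm_square mult.commute of_real_1 power_one)

lemma hrow: assumes "partial_hadamard m N H" "i < m" "k < m"
  shows "(\<Sum>j<N. H$$(i,j) * cnj (H$$(k,j))) = (if i = k then of_nat N else 0)"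
proof (cases "i = k")
  case True
  then have "(\<Sum>j<N. H$$(i,j) * cnj (H$$(k,j))) = (\<Sum>j<N. 1)"
    using assms unfolding partial_hadamard_def by (intro sum.cong) (auto intro: unit_mult_cnj)
  then show ?thesis using True by simp
qed (use assms in \<open>auto simp: partial_hadamard_def\<close>)

lemma sum_delta0: "(\<Sum>j<Suc n. (if j = 0 then 1 else 0) * f j) = (f 0 :: complex)"
proof -
  have "(\<Sum>j<Suc n. (if j = 0 then 1 else 0) * f j) = (\<Sum>j<Suc n. if j = 0 then f 0 else 0)"
    by (rule sum.cong) auto
  then show ?thesis by simp
qed

lemma cof_nonzero: assumes PH: "partial_hadamard n (Suc n) H"
  shows "\<exists>j<Suc n. cof n H j \<noteq> 0"
proof -
  have H: "H \<in> carrier_mat n (Suc n)" using PH by (simp add: partial_hadamard_def)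
  define N where "N = Suc n"
  define c where "c = (1 / of_nat N :: complex)"
  define y where "y j = (if j = 0 then 1 else 0) - c * (\<Sum>i<n. cnj (H$$(i,0)) * H$$(i,j))" for j
  have Nz: "(of_nat N :: complex) \<noteq> 0" unfolding N_def by (simp del: of_nat_Suc)
  have yorth: "(\<Sum>j<Suc n. y j * cnj (H$$(l,j))) = 0" if l: "l < n" for l
  proof -
    have "(\<Sum>j<Suc n. y j * cnj (H$$(l,j))) =
      (\<Sum>j<Suc n. (if j = 0 then 1 else 0) * cnj (H$$(l,j))) - c * (\<Sum>j<Suc n. \<Sum>i<n. cnj (H$$(i,0)) * (H$$(i,j) * cnj (H$$(l,j))))"
      by (simp add: y_def algebra_simps sum_subtractf sum_distrib_left sum_distrib_right)
    also have "(\<Sum>j<Suc n. \<Sum>i<n. cnj (H$$(i,0)) * (H$$(i,j) * cnj (H$$(l,j)))) =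
       (\<Sum>i<n. cnj (H$$(i,0)) * (\<Sum>j<Suc n. H$$(i,j) * cnj (H$$(l,j))))"
      by (subst sum.swap) (simp add: sum_distrib_left del: sum.lessThan_Suc)
    also have "\<dots> = (\<Sum>i<n. cnj (H$$(i,0)) * (if i = l then of_nat N else 0))"
      by (intro sum.cong refl, subst hrow[OF PH]) (use l in \<open>auto simp: N_def\<close>)
    also have "\<dots> = cnj (H$$(l,0)) * of_nat N" using l by (simp add: sum.delta if_distrib cong: if_cong)
    finally show ?thesis using Nz unfolding sum_delta0 by (simp add: c_def del: sum.lessThan_Suc)
  qed
  have ynorm: "(\<Sum>j<Suc n. y j * cnj (y j)) = c"
  proof -
    have "(\<Sum>j<Suc n. y j * cnj (y j)) =
      (\<Sum>j<Suc n. (if j = 0 then 1 else 0) * y j) - cnj c * (\<Sum>j<Suc n. \<Sum>i<n. H$$(i,0) * (y j * cnj (H$$(i,j))))"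
    proof -
      have "y j * cnj (y j) = (if j = 0 then 1 else 0) * y j - cnj c * (\<Sum>i<n. H$$(i,0) * (y j * cnj (H$$(i,j))))" for j
      proof -
        have "cnj (y j) = (if j = 0 then 1 else 0) - cnj c * (\<Sum>i<n. H$$(i,0) * cnj (H$$(i,j)))"
          by (simp add: y_def cnj_sum)
        then have "y j * cnj (y j) = y j * ((if j = 0 then 1 else 0) - cnj c * (\<Sum>i<n. H$$(i,0) * cnj (H$$(i,j))))" by simp
        also have "\<dots> = (if j = 0 then 1 else 0) * y j - cnj c * (\<Sum>i<n. H$$(i,0) * (y j * cnj (H$$(i,j))))"
          by (simp add: right_diff_distrib sum_distrib_left ac_simps)
        finally show ?thesis .
      qed
      then show ?thesis by (simp add: sum_subtractf sum_distrib_left del: sum.lessThan_Suc)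
    qed
    also have "(\<Sum>j<Suc n. \<Sum>i<n. H$$(i,0) * (y j * cnj (H$$(i,j)))) =
       (\<Sum>i<n. H$$(i,0) * (\<Sum>j<Suc n. y j * cnj (H$$(i,j))))"
      by (subst sum.swap) (simp add: sum_distrib_left del: sum.lessThan_Suc)
    also have "\<dots> = 0" using yorth by simp
    finally have "(\<Sum>j<Suc n. y j * cnj (y j)) = y 0" unfolding sum_delta0 by simp
    also have "y 0 = 1 - c * (\<Sum>i<n. 1)"
      using PH by (simp add: y_def partial_hadamard_def unit_mult_cnj mult.commute)
    also have "\<dots> = c" using Nz by (simp add: c_def N_def field_simps)
    finally show ?thesis .
  qed
  define d where "d i = (if i < n then of_nat N else c)" for i
  have "det (extm n H y) * cnj (det (extm n H y)) = (\<Prod>i<Suc n. d i)"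
  proof (rule gram_det)
    show "extm n H y \<in> carrier_mat (Suc n) (Suc n)" by (simp add: extm_def)
    fix i k assume i: "i < Suc n" and k: "k < Suc n"
    show "(\<Sum>j<Suc n. extm n H y $$ (i,j) * cnj (extm n H y $$ (k,j))) = (if i = k then d i else 0)"
    proof (cases "i < n")
      case ti: True
      show ?thesis
      proof (cases "k < n")
        case True
        then show ?thesis using ti hrow[OF PH ti True] by (simp add: extm_def d_def N_def)
      next
        case False
        then have kn: "k = n" using k by simp
        have "(\<Sum>j<Suc n. extm n H y $$ (i,j) * cnj (extm n H y $$ (k,j))) = (\<Sum>j<Suc n. H$$(i,j) * cnj (y j))"
          by (rule sum.cong) (use ti kn in \<open>auto simp: extm_def\<close>)
        also have "\<dots> = cnj (\<Sum>j<Suc n. y j * cnj (H$$(i,j)))"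
          by (simp add: cnj_sum mult.commute del: sum.lessThan_Suc)
        also have "\<dots> = 0" using yorth[OF ti] by simp
        finally show ?thesis using ti kn by simp
      qed
    next
      case fi: False
      then have iN: "i = n" using i by simp
      show ?thesis
      proof (cases "k < n")
        case True
        then show ?thesis using iN yorth[OF True] by (simp add: extm_def)
      next
        case False
        then show ?thesis using iN k ynorm by (simp add: extm_def d_def)
      qed
    qed
  qed
  moreover have "(\<Prod>i<Suc n. d i) \<noteq> 0" using Nz by (simp add: d_def c_def)
  ultimately have "det (extm n H y) \<noteq> 0" by auto
  then have "(\<Sum>j<Suc n. y j * cof n H j) \<noteq> 0" using det_extm[OF H] by simp
  then show ?thesis
  proof (rule contrapos_np)
    assume "\<not> (\<exists>j<Suc n. cof n H j \<noteq> 0)"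
    then have "\<forall>j<Suc n. cof n H j = 0" by blast
    then show "(\<Sum>j<Suc n. y j * cof n H j) = 0" by (simp del: sum.lessThan_Suc)
  qed
qed


lemma cof_norm: assumes PH: "partial_hadamard n (Suc n) H"
  shows "(\<Sum>j<Suc n. cof n H j * cnj (cof n H j)) = of_nat (Suc n) ^ n"
proof -
  have H: "H \<in> carrier_mat n (Suc n)" using PH by (simp add: partial_hadamard_def)
  define r where "r = cof n H"
  define S where "S = (\<Sum>j<Suc n. r j * cnj (r j))"
  have Sreal: "S = of_real (\<Sum>j<Suc n. (cmod (r j))^2)"
    unfolding S_def of_real_sum by (rule sum.cong) (auto simp: complex_norm_square[symmetric])
  have "S \<noteq> 0"
  proof -
    obtain j where j: "j < Suc n" "r j \<noteq> 0" using cof_nonzero[OF PH] r_def by auto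
    have "0 < (\<Sum>j<Suc n. (cmod (r j))^2)"
      by (rule sum_pos2[of _ j]) (use j in auto)
    then show ?thesis using Sreal by (metis less_irrefl of_real_eq_0_iff)
  qed
  define x where "x j = cnj (r j)" for j
  define d where "d i = (if i < n then of_nat (Suc n) else S)" for i
  have "det (extm n H x) * cnj (det (extm n H x)) = (\<Prod>i<Suc n. d i)"
  proof (rule gram_det)
    show "extm n H x \<in> carrier_mat (Suc n) (Suc n)" by (simp add: extm_def)
    fix i k assume i: "i < Suc n" and k: "k < Suc n"
    show "(\<Sum>j<Suc n. extm n H x $$ (i,j) * cnj (extm n H x $$ (k,j))) = (if i = k then d i else 0)"
    proof (cases "i < n")
      case ti: True
      show ?thesis
      proof (cases "k < n")
        case True
        then show ?thesis using ti hrow[OF PH ti True] by (simp add: extm_def d_def)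
      next
        case False
        then have kn: "k = n" using k by simp
        have "(\<Sum>j<Suc n. extm n H x $$ (i,j) * cnj (extm n H x $$ (k,j))) = (\<Sum>j<Suc n. H$$(i,j) * r j)"
          by (rule sum.cong) (use ti kn in \<open>auto simp: extm_def x_def\<close>)
        also have "\<dots> = 0" using cof_orth[OF H ti] by (simp add: r_def)
        finally show ?thesis using ti kn by simp
      qed
    next
      case fi: False
      then have iN: "i = n" using i by simp
      show ?thesis
      proof (cases "k < n")
        case True
        have "(\<Sum>j<Suc n. extm n H x $$ (i,j) * cnj (extm n H x $$ (k,j))) = (\<Sum>j<Suc n. cnj (r j) * cnj (H$$(k,j)))"
          by (rule sum.cong) (use True iN in \<open>auto simp: extm_def x_def\<close>)
        also have "\<dots> = cnj (\<Sum>j<Suc n. H$$(k,j) * r j)"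
          by (simp add: cnj_sum mult.commute del: sum.lessThan_Suc)
        also have "\<dots> = 0" using cof_orth[OF H True] by (simp add: r_def)
        finally show ?thesis using True iN by simp
      next
        case False
        then have kn: "k = n" using k by simp
        have "(\<Sum>j<Suc n. extm n H x $$ (i,j) * cnj (extm n H x $$ (k,j))) = (\<Sum>j<Suc n. cnj (r j) * r j)"
          by (rule sum.cong) (use iN kn in \<open>auto simp: extm_def x_def\<close>)
        then show ?thesis using iN kn by (simp add: d_def S_def mult.commute del: sum.lessThan_Suc)
      qed
    qed
  qed
  moreover have "det (extm n H x) = S"
    using det_extm[OF H] by (simp add: x_def S_def r_def mult.commute del: sum.lessThan_Suc)
  moreover have "cnj S = S" using Sreal by simp
  moreover have "(\<Prod>i<Suc n. d i) = of_nat (Suc n) ^ n * S"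
    by (simp add: d_def)
  ultimately have "S * S = of_nat (Suc n) ^ n * S" by simp
  then show ?thesis using \<open>S \<noteq> 0\<close> by (simp add: S_def r_def)
qed




lemma cmod_cof: "cmod (cof n H j) = cmod (det (remove_col j H))"
  by (simp add: cof_def norm_mult norm_power)

lemma completion_const:
  assumes PH: "partial_hadamard n (Suc n) H" and K: "complex_hadamard (Suc n) K"
    and eq: "\<forall>i<n. \<forall>j<Suc n. K $$ (i,j) = H $$ (i,j)"
    and j: "j < Suc n"
  shows "cmod (cof n H j) = cmod (\<Sum>l<Suc n. K$$(n,l) * cof n H l) / of_nat (Suc n)"
proof -
  define N where "N = Suc n"
  have KP: "partial_hadamard N N K" using K by (simp add: complex_hadamard_def N_def)
  have Kc: "K \<in> carrier_mat N N" using KP by (simp add: partial_hadamard_def)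
  have H: "H \<in> carrier_mat n (Suc n)" using PH by (simp add: partial_hadamard_def)
  have Nz: "(of_nat N :: complex) \<noteq> 0" unfolding N_def by (simp del: of_nat_Suc)
  define B where "B = mat N N (\<lambda>(i,j). cnj (K$$(j,i)) / of_nat N)"
  have Bc: "B \<in> carrier_mat N N" by (simp add: B_def)
  have "K * B = 1\<^sub>m N"
  proof (rule eq_matI)
    fix i k assume "i < dim_row (1\<^sub>m N)" "k < dim_col (1\<^sub>m N)"
    then have ik: "i < N" "k < N" by auto
    have "(K * B) $$ (i,k) = (\<Sum>j<N. K$$(i,j) * cnj (K$$(k,j))) / of_nat N"
      using ik Kc by (simp add: B_def scalar_prod_def atLeast0LessThan sum_divide_distrib)
    also have "\<dots> = (if i = k then 1 else 0)" using hrow[OF KP ik] Nz by simp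
    finally show "(K * B) $$ (i,k) = 1\<^sub>m N $$ (i,k)" using ik by simp
  qed (use Kc Bc in auto)
  then have BK: "B * K = 1\<^sub>m N" using mat_mult_left_right_inverse[OF Kc Bc] by simp
  have col: "(\<Sum>i<N. cnj (K$$(i,a)) * K$$(i,b)) = (if a = b then of_nat N else 0)"
    if ab: "a < N" "b < N" for a b
  proof -
    have "(B * K) $$ (a,b) = (\<Sum>i<N. cnj (K$$(i,a)) * K$$(i,b)) / of_nat N"
      using ab Kc by (simp add: B_def scalar_prod_def atLeast0LessThan sum_divide_distrib)
    then show ?thesis using BK ab Nz by (auto simp: field_simps split: if_splits)
  qed
  define r where "r = cof n H"
  define d where "d = (\<Sum>l<Suc n. K$$(n,l) * r l)"
  have inner: "(\<Sum>l<N. K$$(i,l) * r l) = (if i = n then d else 0)" if i: "i < N" for i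
  proof (cases "i < n")
    case True
    have "(\<Sum>l<N. K$$(i,l) * r l) = (\<Sum>l<Suc n. H$$(i,l) * r l)"
      using eq True by (simp add: N_def del: sum.lessThan_Suc)
    then show ?thesis using cof_orth[OF H True] True by (simp add: r_def)
  next
    case False
    then have "i = n" using i by (simp add: N_def)
    then show ?thesis by (simp add: d_def N_def del: sum.lessThan_Suc)
  qed
  have "(\<Sum>i<N. cnj (K$$(i,j)) * (\<Sum>l<N. K$$(i,l) * r l)) = (\<Sum>l<N. r l * (\<Sum>i<N. cnj (K$$(i,j)) * K$$(i,l)))"
  proof -
    have "(\<Sum>i<N. cnj (K$$(i,j)) * (\<Sum>l<N. K$$(i,l) * r l)) = (\<Sum>i<N. \<Sum>l<N. r l * (cnj (K$$(i,j)) * K$$(i,l)))"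
      by (simp add: sum_distrib_left ac_simps)
    also have "\<dots> = (\<Sum>l<N. \<Sum>i<N. r l * (cnj (K$$(i,j)) * K$$(i,l)))" by (rule sum.swap)
    also have "\<dots> = (\<Sum>l<N. r l * (\<Sum>i<N. cnj (K$$(i,j)) * K$$(i,l)))" by (simp add: sum_distrib_left)
    finally show ?thesis .
  qed
  also have "\<dots> = (\<Sum>l<N. r l * (if j = l then of_nat N else 0))"
    by (rule sum.cong) (use j col in \<open>auto simp: N_def\<close>)
  also have "\<dots> = r j * of_nat N" using j by (simp add: if_distrib N_def cong: if_cong del: sum.lessThan_Suc)
  finally have "r j * of_nat N = (\<Sum>i<N. cnj (K$$(i,j)) * (if i = n then d else 0))"
    using inner by simp
  also have "\<dots> = cnj (K$$(n,j)) * d" by (simp add: if_distrib N_def cong: if_cong del: sum.lessThan_Suc)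
  finally have "cmod (r j) * N = cmod (K$$(n,j)) * cmod d"
    by (metis norm_mult complex_mod_cnj norm_of_nat)
  moreover have "cmod (K$$(n,j)) = 1" using KP j by (simp add: partial_hadamard_def N_def)
  ultimately show ?thesis by (simp add: r_def d_def N_def field_simps del: of_nat_Suc)
qed




lemma const_value:
  assumes PH: "partial_hadamard n (Suc n) H" and n: "n \<ge> 1"
    and c: "\<forall>j<Suc n. cmod (cof n H j) = cmod (cof n H 0)"
    and j: "j < Suc n"
  shows "cmod (cof n H j) = real (Suc n) powr (real (Suc n) / 2 - 1)"
proof -
  define c where "c = cmod (cof n H 0)"
  have "(\<Sum>j<Suc n. cof n H j * cnj (cof n H j)) = (\<Sum>j<Suc n. of_real (c^2))"
  proof (rule sum.cong[OF refl])
    fix j assume "j \<in> {..<Suc n}"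
    then have "cmod (cof n H j) = cmod (cof n H 0)" using c by blast
    then have "cmod (cof n H j) = c" by (simp add: c_def)
    then show "cof n H j * cnj (cof n H j) = of_real (c^2)"
      by (metis complex_norm_square of_real_power)
  qed
  then have "of_real (real (Suc n) * c^2) = (of_nat (Suc n) ^ n :: complex)"
    using cof_norm[OF PH] by simp
  then have e: "real (Suc n) * c^2 = real (Suc n) ^ n"
    by (metis of_real_eq_iff of_real_of_nat_eq of_real_power)
  define N where "N = real (Suc n)"
  have Np: "N > 0" by (simp add: N_def)
  have c2: "c^2 = N ^ (n - 1)"
  proof -
    have "N ^ n = N * N^(n-1)" using n by (cases n) auto
    then show ?thesis using e Np by (simp add: N_def)
  qed
  have p2: "(N powr (N/2 - 1))^2 = N ^ (n - 1)"
  proof -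
    have "(N powr (N/2 - 1))^2 = N powr (N/2 - 1) * N powr (N/2 - 1)" by (simp add: power2_eq_square)
    also have "\<dots> = N powr ((N/2 - 1) + (N/2 - 1))" by (simp only: powr_add)
    also have "\<dots> = N powr (real (n - 1))"
      by (rule arg_cong[where f="\<lambda>x. N powr x"]) (use n in \<open>simp add: N_def\<close>)
    also have "\<dots> = N ^ (n-1)" using Np by (simp add: powr_realpow)
    finally show ?thesis .
  qed
  have "c = N powr (N/2 - 1)"
    using c2 p2 by (metis c_def norm_ge_zero powr_ge_zero power2_eq_imp_eq)
  moreover have "cmod (cof n H j) = c" using c j unfolding c_def by blast
  ultimately show ?thesis by (simp add: N_def)
qed



lemma sign_cof: "(-1::complex)^(j+1) * det (remove_col j H) = (-1)^(Suc n) * cof n H j"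
proof -
  have "(-1::complex)^(j+1) * (-1)^(n+j) = (-1)^(Suc n) * ((-1)^j)^2"
    by (simp add: power_add power2_eq_square ac_simps)
  then show ?thesis by (simp add: cof_def power_add)
qed

lemma completion_ok:
  assumes PH: "partial_hadamard n (Suc n) H"
    and v: "\<forall>j<Suc n. cmod (det (remove_col j H)) = real (Suc n) powr (real (Suc n) / 2 - 1)"
  shows "complex_hadamard (Suc n) (hadamard_completion (Suc n) H)"
proof -
  define N where "N = Suc n"
  define C where "C = hadamard_completion N H"
  define a where "a = real N powr (1 - real N / 2)"
  have H: "H \<in> carrier_mat n (Suc n)" using PH by (simp add: partial_hadamard_def)
  have Cl: "C $$ (n,j) = (-1)^(j+1) * of_real a * cnj (det (remove_col j H))" if "j < N" for j
    using that by (simp add: C_def hadamard_completion_def a_def N_def)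
  have Cu: "C $$ (i,j) = H $$ (i,j)" if "i < n" "j < N" for i j
    using that by (simp add: C_def hadamard_completion_def N_def)
  have cnjCl: "cnj (C $$ (n,j)) = (-1)^(Suc n) * of_real a * cof n H j" if "j < N" for j
    using Cl[OF that] sign_cof[of j H n] by (simp add: ac_simps)
  have orth: "(\<Sum>j<N. H$$(i,j) * cnj (C $$ (n,j))) = 0" if i: "i < n" for i
  proof -
    have "(\<Sum>j<N. H$$(i,j) * cnj (C $$ (n,j))) = (-1)^(Suc n) * of_real a * (\<Sum>j<Suc n. H$$(i,j) * cof n H j)"
      by (simp add: cnjCl sum_distrib_left ac_simps N_def del: sum.lessThan_Suc)
    then show ?thesis using cof_orth[OF H i] by simp
  qed
  have "partial_hadamard N N C"
    unfolding partial_hadamard_def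
  proof (intro conjI allI impI)
    show "C \<in> carrier_mat N N" by (simp add: C_def hadamard_completion_def)
  next
    fix i j assume i: "i < N" and j: "j < N"
    show "cmod (C $$ (i,j)) = 1"
    proof (cases "i < n")
      case True
      then show ?thesis using Cu[OF True j] PH j by (simp add: partial_hadamard_def N_def)
    next
      case False
      then have "i = n" using i by (simp add: N_def)
      then have "cmod (C $$ (i,j)) = a * real N powr (real N / 2 - 1)"
        using Cl[OF j] v j by (simp add: norm_mult norm_power a_def N_def)
      also have "\<dots> = real N powr ((1 - real N / 2) + (real N / 2 - 1))" by (simp only: a_def powr_add)
      also have "\<dots> = real N powr 0" by (rule arg_cong[where f="\<lambda>x. real N powr x"]) simp
      also have "\<dots> = 1" by (simp add: N_def)
      finally show ?thesis .
    qed
  next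
    fix i k assume i: "i < N" and k: "k < N" and ik: "i \<noteq> k"
    show "(\<Sum>j<N. C $$ (i,j) * cnj (C $$ (k,j))) = 0"
    proof (cases "i < n")
      case ti: True
      show ?thesis
      proof (cases "k < n")
        case True
        have "(\<Sum>j<N. C $$ (i,j) * cnj (C $$ (k,j))) = (\<Sum>j<N. H $$ (i,j) * cnj (H $$ (k,j)))"
          by (rule sum.cong) (use Cu ti True in auto)
        then show ?thesis using PH ti True ik by (simp add: partial_hadamard_def N_def)
      next
        case False
        then have "k = n" using k by (simp add: N_def)
        then have "(\<Sum>j<N. C $$ (i,j) * cnj (C $$ (k,j))) = (\<Sum>j<N. H $$ (i,j) * cnj (C $$ (n,j)))"
          by (intro sum.cong) (use Cu ti in auto)
        then show ?thesis using orth[OF ti] by simp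
      qed
    next
      case False
      then have iN: "i = n" using i by (simp add: N_def)
      then have kn: "k < n" using k ik by (simp add: N_def)
      have "(\<Sum>j<N. C $$ (i,j) * cnj (C $$ (k,j))) = (\<Sum>j<N. C $$ (n,j) * cnj (H $$ (k,j)))"
        by (intro sum.cong) (use Cu iN kn in auto)
      also have "\<dots> = cnj (\<Sum>j<N. H$$(k,j) * cnj (C $$ (n,j)))"
        by (simp add: cnj_sum mult.commute N_def del: sum.lessThan_Suc)
      also have "\<dots> = 0" using orth[OF kn] by simp
      finally show ?thesis .
    qed
  qed
  then show ?thesis by (simp add: complex_hadamard_def C_def N_def)
qed


theorem proposition3p1:
  fixes N :: nat and H :: "complex mat"
  assumes "N \<ge> 2"
    and "partial_hadamard (N - 1) N H"
  shows "((\<exists>K. complex_hadamard N K \<and> (\<forall>i<N - 1. \<forall>j<N. K $$ (i, j) = H $$ (i, j)))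
            \<longleftrightarrow> (\<forall>j<N. \<forall>k<N. cmod (det (remove_col j H)) = cmod (det (remove_col k H))))
       \<and> ((\<forall>j<N. \<forall>k<N. cmod (det (remove_col j H)) = cmod (det (remove_col k H)))
            \<longleftrightarrow> (\<forall>j<N. cmod (det (remove_col j H)) = real N powr (real N / 2 - 1)))
       \<and> ((\<exists>K. complex_hadamard N K \<and> (\<forall>i<N - 1. \<forall>j<N. K $$ (i, j) = H $$ (i, j)))
            \<longrightarrow> complex_hadamard N (hadamard_completion N H))"
proof -
  obtain n where N: "N = Suc n" and n: "n \<ge> 1" using assms(1)
    by (metis Suc_diff_1 Suc_le_mono le_less_trans less_2_cases_iff linorder_not_le one_add_one plus_1_eq_Suc zero_less_Suc)
  have PH: "partial_hadamard n (Suc n) H" using assms(2) N by simp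
  let ?P1 = "\<exists>K. complex_hadamard N K \<and> (\<forall>i<N - 1. \<forall>j<N. K $$ (i, j) = H $$ (i, j))"
  let ?P2 = "\<forall>j<N. \<forall>k<N. cmod (det (remove_col j H)) = cmod (det (remove_col k H))"
  let ?P3 = "\<forall>j<N. cmod (det (remove_col j H)) = real N powr (real N / 2 - 1)"
  have h12: ?P2 if ?P1
  proof -
    from that obtain K where K: "complex_hadamard (Suc n) K" "\<forall>i<n. \<forall>j<Suc n. K $$ (i,j) = H $$ (i,j)"
      using N by auto
    show ?thesis
    proof (intro allI impI)
      fix j k assume "j < N" "k < N"
      then have "j < Suc n" "k < Suc n" using N by auto
      then have "cmod (cof n H j) = cmod (cof n H k)"
        using completion_const[OF PH K] by simp
      then show "cmod (det (remove_col j H)) = cmod (det (remove_col k H))" by (simp only: cmod_cof)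
    qed
  qed
  have h23: ?P3 if ?P2
  proof -
    have c: "\<forall>j<Suc n. cmod (cof n H j) = cmod (cof n H 0)"
    proof (intro allI impI)
      fix j assume "j < Suc n"
      then have "j < N" "0 < N" using N by auto
      with that have "cmod (det (remove_col j H)) = cmod (det (remove_col 0 H))" by blast
      then show "cmod (cof n H j) = cmod (cof n H 0)" by (simp only: cmod_cof)
    qed
    show ?thesis using const_value[OF PH n c] N by (simp add: cmod_cof)
  qed
  have h32: ?P2 if ?P3 using that by simp
  have h3c: "complex_hadamard N (hadamard_completion N H)" if ?P3
    using completion_ok[OF PH] that N by simp
  have hc1: ?P1 if "complex_hadamard N (hadamard_completion N H)"
    using that by (intro exI[of _ "hadamard_completion N H"]) (auto simp: hadamard_completion_def)
  show ?thesis using h12 h23 h32 h3c hc1 by blast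
qed

end
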